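(* Let $K$ be a field of characteristic $\neq2$, $\zeta_4$ a primitive fourth root of unity in a fixed algebraic closure of $K$, and let $x\in K^*$ with $-x\in(K^* )^2$. Choose a fourth root $\sqrt[4]x$ of $x$, giving the Kummer cocycle $x:G_K\to\mathbb Z/4$, $g(\sqrt[4]x)/\sqrt[4]x=\zeta_4^{x(g)}$, and the cochain $\binom x2:G_K\to\mathbb Z/2$, $g\mapsto\binom{x(g)}2\bmod2$. Then there is an equality of cocycles $\binom x2=\{2\sqrt{-x}\}:G_K\to\mathbb Z/2$, where $\sqrt{-x}=\zeta_4(\sqrt[4]x)^2\in K$.
   Context: For $z\in K^*$, $\{z\}:G_K\to\mathbb Z/2$ denotes the mod-$2$ Kummer cocycle $g\mapsto g(\sqrt z)/\sqrt z\in\mu_2=\mathbb Z/2$ (independent of the choice of square root). *)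

theory Defs
  imports "HOL-Computational_Algebra.Polynomial"
begin

text \<open>A subfield K of the ambient field (the ambient type plays the role of a fixed
algebraic closure of K).\<close>
definition is_subfield :: "'a::field set \<Rightarrow> bool" where
  "is_subfield K \<longleftrightarrow> 0 \<in> K \<and> 1 \<in> K \<and>
     (\<forall>a\<in>K. \<forall>b\<in>K. a + b \<in> K \<and> a * b \<in> K) \<and>
     (\<forall>a\<in>K. - a \<in> K \<and> inverse a \<in> K)"

definition is_algebraic_closure_of :: "'a::field set \<Rightarrow> bool" where
  "is_algebraic_closure_of K \<longleftrightarrow>
     (\<forall>p::'a poly. degree p > 0 \<longrightarrow> (\<exists>z. poly p z = 0)) \<and>
     (\<forall>a::'a. \<exists>p. p \<noteq> 0 \<and> (\<forall>i. coeff p i \<in> K) \<and> poly p a = 0)"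

definition abs_galois :: "'a::field set \<Rightarrow> ('a \<Rightarrow> 'a) set" where
  "abs_galois K = {g. bij g \<and> (\<forall>a b. g (a + b) = g a + g b \<and> g (a * b) = g a * g b)
                      \<and> (\<forall>a\<in>K. g a = a)}"

text \<open>Mod-4 Kummer cocycle of a chosen fourth root r: g(r)/r = zeta^(k g), k g in {0..3}
  (representing Z/4).\<close>
definition kummer4 :: "'a::field \<Rightarrow> 'a \<Rightarrow> ('a \<Rightarrow> 'a) \<Rightarrow> nat" where
  "kummer4 zeta r g = (THE k. k < 4 \<and> g r = zeta ^ k * r)"

text \<open>Mod-2 Kummer cocycle {z}: g \<mapsto> g(sqrt z)/sqrt z in mu_2 = Z/2 (as 0/1).\<close>
definition kummer2 :: "'a::field \<Rightarrow> ('a \<Rightarrow> 'a) \<Rightarrow> nat" where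
  "kummer2 z g = (let w = (SOME w. w ^ 2 = z) in if g w = w then 0 else 1)"

end

theory Submission
  imports Defs
begin
lemma zpow_cases:
  fixes zeta :: "'a::field"
  assumes z2: "zeta^2 = -1" and k: "k < (4::nat)"
  shows "zeta^k = (if k = 0 then 1 else if k = 1 then zeta else if k = 2 then -1 else -zeta)"
proof -
  have "k = 0 \<or> k = 1 \<or> k = 2 \<or> k = 3" using k by auto
  moreover have "zeta^3 = -zeta" using z2 by (simp add: power3_eq_cube power2_eq_square)
  ultimately show ?thesis using z2 by auto
qed

lemma zpow_inj:
  fixes zeta :: "'a::field"
  assumes z2: "zeta^2 = -1" and two: "(2::'a) \<noteq> 0"
    and j: "j < (4::nat)" and k: "k < 4" and e: "zeta^j = zeta^k"
  shows "j = k"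
proof -
  have m1: "(1::'a) \<noteq> -1" using two by (metis one_add_one add_eq_0_iff2 )
  have z0: "zeta \<noteq> 0" using z2 by auto
  have a: "zeta \<noteq> 1" "1 \<noteq> zeta" using z2 m1 by auto
  have b: "zeta \<noteq> -1" "-1 \<noteq> zeta" using z2 m1 by auto
  have b2: "-zeta \<noteq> 1" "1 \<noteq> -zeta" using b by (auto simp: minus_equation_iff[of zeta])
  have c: "zeta \<noteq> - zeta" "-zeta \<noteq> zeta" using z0 two
    by (metis add_eq_0_iff2 mult_2 mult_eq_0_iff)+
  have d: "-zeta \<noteq> -1" "-1 \<noteq> -zeta" using a by auto
  have "j = 0 \<or> j = 1 \<or> j = 2 \<or> j = 3" "k = 0 \<or> k = 1 \<or> k = 2 \<or> k = 3" using j k by auto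
  then show ?thesis using e zpow_cases[OF z2 j] zpow_cases[OF z2 k] m1 a b b2 c d
    by (elim disjE) simp_all
qed
lemma k4:
  fixes zeta r :: "'a::field"
  assumes z2: "zeta^2 = -1" and two: "(2::'a) \<noteq> 0" and r0: "r \<noteq> 0"
    and k: "k < 4" and gr: "g r = zeta^k * r"
  shows "kummer4 zeta r g = k"
  unfolding kummer4_def
proof (rule the_equality)
  show "k < 4 \<and> g r = zeta ^ k * r" using k gr by simp
  fix j assume "j < 4 \<and> g r = zeta ^ j * r"
  then have "j < 4" "zeta^j = zeta^k" using gr r0 by auto
  then show "j = k" using zpow_inj[OF z2 two _ k] by blast
qed

lemma k2:
  fixes w0 :: "'a::field"
  assumes two: "(2::'a) \<noteq> 0" and w0: "w0 \<noteq> 0"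
    and gneg: "\<And>a. g (- a) = - g a"
    and gw: "g w0 = w0 \<or> g w0 = - w0"
  shows "kummer2 (w0^2) g = (if g w0 = w0 then 0 else 1)"
proof -
  define w where "w = (SOME w. w ^ 2 = w0^2)"
  have "w^2 = w0^2" unfolding w_def by (rule someI[of _ w0]) simp
  then have ww: "w = w0 \<or> w = - w0" by (simp add: power2_eq_iff)
  have ne: "w0 \<noteq> - w0" using w0 two
    by (metis add_eq_0_iff2 mult_2 mult_eq_0_iff)
  have "(g w = w) = (g w0 = w0)"
    using ww gneg gw ne by auto
  then show ?thesis unfolding kummer2_def w_def[symmetric] by (simp add: Let_def)
qed

theorem lemma12p5:
  fixes K :: "'a::field set" and zeta x r :: 'a
  assumes "is_subfield K"
    and "is_algebraic_closure_of K"
    and "(2::'a) \<noteq> 0"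
    and "zeta ^ 4 = 1" and "zeta ^ 2 \<noteq> 1"
    and "x \<in> K" and "x \<noteq> 0"
    and "\<exists>s\<in>K. s \<noteq> 0 \<and> s ^ 2 = - x"
    and "r ^ 4 = x"
  shows "\<forall>g\<in>abs_galois K. (kummer4 zeta r g choose 2) mod 2 = kummer2 (2 * (zeta * r ^ 2)) g"
proof
  fix g assume gG: "g \<in> abs_galois K"
  have two: "(2::'a) \<noteq> 0" by fact
  have "(zeta^2 - 1) * (zeta^2 + 1) = 0"
  proof -
    have "(zeta^2 - 1) * (zeta^2 + 1) = zeta^4 - 1" by (simp add: algebra_simps power2_eq_square power4_eq_xxxx)
    then show ?thesis using assms(4) by simp
  qed
  then have z2: "zeta^2 = -1" using assms(5)
    by (simp add: eq_neg_iff_add_eq_0)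
  have m1: "(1::'a) \<noteq> -1" using two by (metis one_add_one add_eq_0_iff2)
  have z0: "zeta \<noteq> 0" using z2 by auto
  have r0: "r \<noteq> 0" using assms(7,9) by auto
  obtain s where sK: "s \<in> K" and s2: "s^2 = -x" using assms(8) by auto
  define y where "y = zeta * r^2"
  have "y^2 = s^2" unfolding y_def using z2 assms(9) s2
    by (simp add: power_mult_distrib power_mult[symmetric])
  then have "y = s \<or> y = -s" by (simp add: power2_eq_iff)
  moreover have "-s \<in> K" using assms(1) sK unfolding is_subfield_def by auto
  ultimately have yK: "y \<in> K" using sK by auto
  have m1K: "-1 \<in> K" using assms(1) unfolding is_subfield_def by auto
  have gadd: "\<And>a b. g (a*b) = g a * g b" and gfix: "\<And>a. a \<in> K \<Longrightarrow> g a = a"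
    using gG unfolding abs_galois_def by auto
  have gneg: "\<And>a. g (- a) = - g a"
  proof -
    fix a have "g ((-1) * a) = g (-1) * g a" by (rule gadd)
    then show "g (- a) = - g a" using gfix[OF m1K] by simp
  qed
  have "g zeta ^ 2 = -1"
    using gadd[of zeta zeta] gfix[OF m1K] z2 by (simp add: power2_eq_square)
  then have "g zeta ^ 2 = zeta ^ 2" using z2 by simp
  then have gz: "g zeta = zeta \<or> g zeta = - zeta" by (simp add: power2_eq_iff)
  have gy: "g zeta * g r ^ 2 = zeta * r^2"
    using gfix[OF yK] gadd[of zeta "r*r"] gadd[of r r] unfolding y_def
    by (simp add: power2_eq_square)
  define w0 where "w0 = r * (1 + zeta)"
  have w0sq: "w0^2 = 2 * (zeta * r^2)" unfolding w0_def using z2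
    by (simp add: power2_eq_square algebra_simps)
  have zm1: "1 + zeta \<noteq> 0" using z2 m1
    by (metis add.commute add_eq_0_iff2 power2_minus power_one)
  have w00: "w0 \<noteq> 0" unfolding w0_def using r0 zm1 by simp
  have gw0: "g w0 = g r * (1 + g zeta)"
  proof -
    have "g (1 + zeta) = 1 + g zeta"
      using gG assms(1) unfolding abs_galois_def is_subfield_def by auto
    then show ?thesis unfolding w0_def using gadd by simp
  qed
  have ne: "w0 \<noteq> - w0" using w00 two
    by (metis add_eq_0_iff2 mult_2 mult_eq_0_iff)
  show "(kummer4 zeta r g choose 2) mod 2 = kummer2 (2 * (zeta * r ^ 2)) g"
  proof (cases "g zeta = zeta")
    case True
    then have "g r ^2 = r^2" using gy z0 by simp
    then have "g r = r \<or> g r = - r" by (simp add: power2_eq_iff)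
    then show ?thesis
    proof
      assume gr: "g r = r"
      have "kummer4 zeta r g = 0" by (rule k4[OF z2 two r0]) (use gr in auto)
      moreover have "g w0 = w0" using gw0 gr True w0_def by simp
      ultimately show ?thesis using k2[of w0 g, OF two w00 gneg] w0sq by (simp add: numeral_2_eq_2)
    next
      assume gr: "g r = - r"
      have "kummer4 zeta r g = 2" by (rule k4[OF z2 two r0]) (use gr z2 in auto)
      moreover have "g w0 = - w0" using gw0 gr True w0_def by simp
      ultimately show ?thesis using k2[of w0 g, OF two w00 gneg] ne w0sq by (simp add: numeral_2_eq_2)
    qed
  next
    case False
    then have gzm: "g zeta = - zeta" using gz by simp
    have "zeta * (- (g r ^2)) = zeta * r^2" using gy gzm by simp
    then have "- (g r ^2) = r^2" using z0 mult_left_cancel by blast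
    then have "g r ^2 = (zeta * r)^2" using z2
      by (simp add: power_mult_distrib minus_equation_iff)
    then have "g r = zeta * r \<or> g r = - (zeta * r)" by (simp add: power2_eq_iff)
    then show ?thesis
    proof
      assume gr: "g r = zeta * r"
      have "kummer4 zeta r g = 1" by (rule k4[OF z2 two r0]) (use gr in auto)
      moreover have "g w0 = w0" using gw0 gr gzm z2 unfolding w0_def
        by (simp add: algebra_simps power2_eq_square)
      ultimately show ?thesis using k2[of w0 g, OF two w00 gneg] w0sq by (simp add: numeral_2_eq_2)
    next
      assume gr: "g r = - (zeta * r)"
      have "zeta^3 = -zeta" using z2 by (simp add: power3_eq_cube power2_eq_square)
      then have "kummer4 zeta r g = 3" by (intro k4[OF z2 two r0]) (use gr in auto)
      moreover have "g w0 = - w0" using gw0 gr gzm z2 unfolding w0_def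
        by (simp add: algebra_simps power2_eq_square)
      moreover have "(3 choose 2) mod 2 = (1::nat)"
      proof -
        have "(3::nat) choose 2 = 3" by (simp add: numeral_3_eq_3 numeral_2_eq_2)
        then show ?thesis by simp
      qed
      ultimately show ?thesis using k2[of w0 g, OF two w00 gneg] ne w0sq by (simp add: numeral_2_eq_2)
    qed
  qed
qed

end
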